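(* In the setting of the context, for every $g_0\in F_{xz}$ and $g_1\in F_{yz}$ we have $|g_1^{-1}g_0|_{S_1}\ge f(|g_0|_{S_1})$.
   Context: $H$ is a finitely presented group with finite generating set $T$, containing a free subgroup $F$ of rank $p$ with free basis $R=\{d_1,\dots,d_p\}\subset T$ (standing assumption: $\mathrm{Dist}_F^H$ admits an exponentially bounded sequence of palindromic certificates in $F$). $F_x,F_y,F_z$ are free of rank $p$ with bases $R_x=\{x_i\},R_y=\{y_i\},R_z=\{z_i\}$. $G_1=[H\ast_{\langle d_i=x_iy_i^{-1}\rangle}(F_x\times F_y\times F_z)]\times\langle s_1\rangle$; $a_i=x_iz_i$, $b_i=y_iz_i$, $R_{xz}=\{a_i\}$, $R_{yz}=\{b_i\}$, $F_{xz}=\langle R_{xz}\rangle$, $F_{yz}=\langle R_{yz}\rangle$; $S_1=T\cup R_x\cup R_y\cup R_z\cup R_{xz}\cup R_{yz}\cup\{s_1\}$. $\mathrm{Dist}_F^H(n)=\max\{|g|_R:g\in F,|g|_T\le n\}$ (linearly interpolated). $f=\Delta^{-1}$, where $\Delta:[0,\infty)\to[0,\infty)$ is a non-decreasing bijection Lipschitz equivalent to $\mathrm{Dist}_F^H$ with $\Delta(r)\ge r$ for $r\ge1$ and $f(|g|_R)\le|g|_T$ for every $g\in F$ (Lipschitz equivalence: $\exists M\ge1$ with $g(r)\le Mf(Mr)$, $f(r)\le Mg(Mr)$ for $r\ge1$). *)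

theory Defs
  imports Complex_Main "HOL-Algebra.Generated_Groups"
begin

text \<open>A word over an alphabet 'a is a list of signed letters: (a, True) is a, (a, False) is a^-1.\<close>

fun weval :: "('g, 'm) monoid_scheme \<Rightarrow> ('a \<Rightarrow> 'g) \<Rightarrow> ('a \<times> bool) list \<Rightarrow> 'g" where
  "weval G h [] = \<one>\<^bsub>G\<^esub>"
| "weval G h ((a, b) # w) = (if b then h a else inv\<^bsub>G\<^esub> (h a)) \<otimes>\<^bsub>G\<^esub> weval G h w"

definition winv :: "('a \<times> bool) list \<Rightarrow> ('a \<times> bool) list" where
  "winv w = rev (map (\<lambda>(a, b). (a, \<not> b)) w)"

definition reduced_word :: "('a \<times> bool) list \<Rightarrow> bool" where
  "reduced_word w \<longleftrightarrow>
     (\<forall>i. Suc i < length w \<longrightarrow> \<not> (fst (w ! i) = fst (w ! Suc i) \<and> snd (w ! i) \<noteq> snd (w ! Suc i)))"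

definition wlen :: "('g, 'm) monoid_scheme \<Rightarrow> 'g set \<Rightarrow> 'g \<Rightarrow> nat" where
  "wlen G S g = (LEAST n. \<exists>w. set (map fst w) \<subseteq> S \<and> length w = n \<and> weval G id w = g)"

definition free_basis :: "('g, 'm) monoid_scheme \<Rightarrow> 'g set \<Rightarrow> bool" where
  "free_basis G D \<longleftrightarrow> D \<subseteq> carrier G \<and>
     (\<forall>w. set (map fst w) \<subseteq> D \<and> reduced_word w \<and> w \<noteq> [] \<longrightarrow> weval G id w \<noteq> \<one>\<^bsub>G\<^esub>)"

inductive pres_eq :: "('a \<times> bool) list set \<Rightarrow> ('a \<times> bool) list \<Rightarrow> ('a \<times> bool) list \<Rightarrow> bool"
  for Rel where
  refl: "pres_eq Rel w w"
| sym: "pres_eq Rel u v \<Longrightarrow> pres_eq Rel v u"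
| trans: "pres_eq Rel u v \<Longrightarrow> pres_eq Rel v w \<Longrightarrow> pres_eq Rel u w"
| cancel: "pres_eq Rel (u @ v) (u @ [(a, b), (a, \<not> b)] @ v)"
| rel: "r \<in> Rel \<Longrightarrow> pres_eq Rel (u @ v) (u @ r @ v)"

definition fin_presented :: "('g, 'm) monoid_scheme \<Rightarrow> 'g set \<Rightarrow> bool" where
  "fin_presented H T \<longleftrightarrow> (\<exists>Rel. finite Rel \<and> (\<forall>r\<in>Rel. set (map fst r) \<subseteq> T) \<and>
     (\<forall>u v. set (map fst u) \<subseteq> T \<longrightarrow> set (map fst v) \<subseteq> T \<longrightarrow>
        (weval H id u = weval H id v \<longleftrightarrow> pres_eq Rel u v)))"

definition glen :: "('a \<times> bool) list set \<Rightarrow> 'a set \<Rightarrow> ('a \<times> bool) list \<Rightarrow> nat" where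
  "glen Rel S w = (LEAST n. \<exists>w'. set (map fst w') \<subseteq> S \<and> length w' = n \<and> pres_eq Rel w w')"

datatype 'h gen1 = HG 'h | X nat | Y nat | Z nat | A nat | B nat | S1

definition comm_word :: "'a \<Rightarrow> 'a \<Rightarrow> ('a \<times> bool) list" where
  "comm_word a b = [(a, True), (b, True), (a, False), (b, False)]"

definition S1set :: "'h set \<Rightarrow> nat \<Rightarrow> 'h gen1 set" where
  "S1set T p = HG ` T \<union> X ` {..<p} \<union> Y ` {..<p} \<union> Z ` {..<p} \<union> A ` {..<p} \<union> B ` {..<p} \<union> {S1}"

text \<open>Relators of
  G_1 = [H *_{d_i = x_i y_i^-1} (F_x x F_y x F_z)] x <s_1>, with a_i = x_i z_i, b_i = y_i z_i.\<close>
definition G1_rels :: "('h, 'm) monoid_scheme \<Rightarrow> 'h set \<Rightarrow> (nat \<Rightarrow> 'h) \<Rightarrow> nat \<Rightarrow> ('h gen1 \<times> bool) list set" where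
  "G1_rels H T d p =
     {map (\<lambda>(t, b). (HG t, b)) w | w. set (map fst w) \<subseteq> T \<and> weval H id w = \<one>\<^bsub>H\<^esub>}
   \<union> {comm_word (X i) (Y j) | i j. i < p \<and> j < p}
   \<union> {comm_word (X i) (Z j) | i j. i < p \<and> j < p}
   \<union> {comm_word (Y i) (Z j) | i j. i < p \<and> j < p}
   \<union> {[(HG (d i), True), (Y i, True), (X i, False)] | i. i < p}
   \<union> {[(A i, True), (Z i, False), (X i, False)] | i. i < p}
   \<union> {[(B i, True), (Z i, False), (Y i, False)] | i. i < p}
   \<union> {comm_word S1 s | s. s \<in> S1set T p}"

definition Dist_nat :: "('g, 'm) monoid_scheme \<Rightarrow> 'g set \<Rightarrow> 'g set \<Rightarrow> nat \<Rightarrow> real" where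
  "Dist_nat H T R n = Max {real (wlen H R g) | g. g \<in> generate H R \<and> wlen H T g \<le> n}"

definition Dist :: "('g, 'm) monoid_scheme \<Rightarrow> 'g set \<Rightarrow> 'g set \<Rightarrow> real \<Rightarrow> real" where
  "Dist H T R r = (let k = nat \<lfloor>r\<rfloor> in
     Dist_nat H T R k + (r - real k) * (Dist_nat H T R (Suc k) - Dist_nat H T R k))"

definition lip_equiv :: "(real \<Rightarrow> real) \<Rightarrow> (real \<Rightarrow> real) \<Rightarrow> bool" where
  "lip_equiv g f \<longleftrightarrow> (\<exists>M\<ge>1. \<forall>r\<ge>1. g r \<le> M * f (M * r) \<and> f r \<le> M * g (M * r))"

end

theory Submission
  imports Defs
begin

definition cancels :: "('a \<times> bool) \<Rightarrow> ('a \<times> bool) \<Rightarrow> bool" where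
  "cancels x y \<longleftrightarrow> fst x = fst y \<and> snd x \<noteq> snd y"

fun red :: "('a \<times> bool) list \<Rightarrow> bool" where
  "red [] = True"
| "red [x] = True"
| "red (x # y # w) = (\<not> cancels x y \<and> red (y # w))"

lemma reduced_word_red: "reduced_word w = red w"
proof (induction w rule: red.induct)
  case 1 then show ?case by (simp add: reduced_word_def)
next
  case (2 x) then show ?case by (simp add: reduced_word_def)
next
  case (3 x y w)
  have "reduced_word (x # y # w) \<longleftrightarrow> \<not> cancels x y \<and> reduced_word (y # w)"
    unfolding reduced_word_def cancels_def
    apply (rule iffI)
     apply (intro conjI allI impI)
      apply (drule spec[of _ 0]) apply simp
     apply (drule_tac x="Suc i" in spec) apply simp
    apply (intro allI impI)
    subgoal for i by (cases i) auto
    done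
  then show ?case using 3 by simp
qed

lemma red_Cons: "red (x # w) \<longleftrightarrow> red w \<and> (w \<noteq> [] \<longrightarrow> \<not> cancels x (hd w))"
  by (cases w) auto

lemma red_append: "red (u @ v) \<longleftrightarrow> red u \<and> red v \<and> (u \<noteq> [] \<longrightarrow> v \<noteq> [] \<longrightarrow> \<not> cancels (last u) (hd v))"
  by (induction u) (auto simp: red_Cons)

lemma cancels_sym: "cancels x y = cancels y x"
  by (auto simp: cancels_def)

lemma red_rev: "red (rev w) = red w"
  by (induction w) (auto simp: red_append red_Cons hd_rev last_rev cancels_sym)

lemma red_flip: "red (map (\<lambda>(a, b). (a, \<not> b)) w) = red w"
  by (induction w rule: red.induct) (auto simp: cancels_def split: prod.splits)

lemma red_winv: "red (winv w) = red w"
  by (simp add: winv_def red_rev red_flip)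

lemma winv_Cons: "winv (x # w) = winv w @ [(fst x, \<not> snd x)]"
  by (cases x) (simp add: winv_def)

lemma fst_set_winv: "fst ` set (winv w) = fst ` set w"
  by (force simp: winv_def)

lemma not_red_split: "\<not> red w \<Longrightarrow> \<exists>u a b v. w = u @ [(a, b), (a, \<not> b)] @ v"
proof (induction w rule: red.induct)
  case (3 x y w)
  show ?case
  proof (cases "cancels x y")
    case True
    then have "x = (fst x, snd x)" "y = (fst x, \<not> snd x)"
      by (auto simp: cancels_def prod_eq_iff)
    then show ?thesis by (metis append_Nil append_Cons)
  next
    case False
    then have "\<not> red (y # w)" using 3(2) by simp
    then obtain u a b v where "y # w = u @ [(a, b), (a, \<not> b)] @ v" using 3(1) by blast
    then have "x # y # w = (x # u) @ [(a, b), (a, \<not> b)] @ v" by simp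
    then show ?thesis by blast
  qed
qed auto

context group begin

lemma weval_closed: "(\<forall>x\<in>set w. h (fst x) \<in> carrier G) \<Longrightarrow> weval G h w \<in> carrier G"
proof (induction w)
  case (Cons x w) then show ?case by (cases x) auto
qed simp

lemma weval_append:
  "(\<forall>x\<in>set u. h (fst x) \<in> carrier G) \<Longrightarrow> (\<forall>x\<in>set v. h (fst x) \<in> carrier G) \<Longrightarrow>
   weval G h (u @ v) = weval G h u \<otimes> weval G h v"
proof (induction u)
  case (Cons x u) then show ?case
    by (cases x) (auto simp: m_assoc weval_closed)
qed (simp add: weval_closed)

lemma weval_winv: "(\<forall>x\<in>set w. h (fst x) \<in> carrier G) \<Longrightarrow> weval G h (winv w) = inv (weval G h w)"
proof (induction w)
  case Nil then show ?case by (simp add: winv_def)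
next
  case (Cons x w)
  obtain a b where x: "x = (a, b)" by (cases x)
  have ha: "h a \<in> carrier G" using Cons.prems x by auto
  have hw: "\<forall>x\<in>set w. h (fst x) \<in> carrier G" using Cons.prems by auto
  have hwi: "\<forall>x\<in>set (winv w). h (fst x) \<in> carrier G"
  proof
    fix y assume "y \<in> set (winv w)"
    then have "fst y \<in> fst ` set w" by (metis fst_set_winv imageI)
    then show "h (fst y) \<in> carrier G" using hw by auto
  qed
  have "weval G h (winv (x # w)) = weval G h (winv w) \<otimes> weval G h [(a, \<not> b)]"
    using winv_Cons[of x w] x ha hwi by (simp add: weval_append)
  also have "\<dots> = inv (weval G h w) \<otimes> (if b then inv (h a) else h a)"
    using Cons.IH hw ha by auto
  also have "\<dots> = inv ((if b then h a else inv (h a)) \<otimes> weval G h w)"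
    using ha weval_closed[OF hw] by (auto simp: inv_mult_group)
  finally show ?case using x by simp
qed

lemma weval_one: "(\<forall>x\<in>set w. h (fst x) = \<one>) \<Longrightarrow> weval G h w = \<one>"
proof (induction w)
  case (Cons x w) then show ?case by (cases x) auto
qed simp

lemma pres_eq_weval:
  assumes "\<And>a. h a \<in> carrier G" and "\<forall>r\<in>Rel. weval G h r = \<one>"
  shows "pres_eq Rel u v \<Longrightarrow> weval G h u = weval G h v"
proof (induction rule: pres_eq.induct)
  case (cancel u v a b)
  have ha: "h a \<in> carrier G" using assms(1) by auto
  have hv: "weval G h v \<in> carrier G" using assms(1) by (simp add: weval_closed)
  have "weval G h ([(a, b), (a, \<not> b)] @ v) = weval G h v"
    using ha hv by (cases b) (simp_all add: m_assoc[symmetric])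
  then have "weval G h (u @ ([(a, b), (a, \<not> b)] @ v)) = weval G h u \<otimes> weval G h v"
    using weval_append[where u=u and v="[(a, b), (a, \<not> b)] @ v"] assms(1) by simp
  also have "\<dots> = weval G h (u @ v)" using weval_append[where u=u and v=v] assms(1) by simp
  finally show ?case by simp
next
  case (rel r u v)
  have "weval G h (u @ r @ v) = weval G h u \<otimes> (weval G h r \<otimes> weval G h v)"
    using assms(1) by (simp add: weval_append)
  also have "weval G h r = \<one>" using assms(2) rel by auto
  finally show ?case using assms(1) by (simp add: weval_append weval_closed)
qed auto

lemma weval_generate: "set (map fst w) \<subseteq> D \<Longrightarrow> D \<subseteq> carrier G \<Longrightarrow> weval G id w \<in> generate G D"
proof (induction w)
  case Nil then show ?case by (simp add: generate.one)
next
  case (Cons x w)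
  obtain a b where x: "x = (a, b)" by (cases x)
  have "a \<in> D" using Cons.prems x by auto
  then have "(if b then a else inv a) \<in> generate G D"
    by (auto intro: generate.incl generate.inv)
  then show ?case using Cons x by (auto intro: generate.eng)
qed

end


context group begin

lemma weval_cancel:
  assumes "\<forall>x\<in>set u. h (fst x) \<in> carrier G" "\<forall>x\<in>set v. h (fst x) \<in> carrier G" "h a \<in> carrier G"
  shows "weval G h (u @ [(a, b), (a, \<not> b)] @ v) = weval G h (u @ v)"
proof -
  have hv: "weval G h v \<in> carrier G" using assms by (simp add: weval_closed)
  have "weval G h ([(a, b), (a, \<not> b)] @ v) = weval G h v"
    using assms(3) hv by (cases b) (simp_all add: m_assoc[symmetric])
  then have "weval G h (u @ ([(a, b), (a, \<not> b)] @ v)) = weval G h u \<otimes> weval G h v"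
    using weval_append[where u=u and v="[(a, b), (a, \<not> b)] @ v"] assms by simp
  also have "\<dots> = weval G h (u @ v)" using weval_append[where u=u and v=v] assms by simp
  finally show ?thesis by simp
qed

lemma reduced_unique:
  assumes fb: "free_basis G D"
  shows "red v1 \<Longrightarrow> red v2 \<Longrightarrow> set (map fst v1) \<subseteq> D \<Longrightarrow> set (map fst v2) \<subseteq> D \<Longrightarrow>
    weval G id v1 = weval G id v2 \<Longrightarrow> v1 = v2"
proof (induction v1 arbitrary: v2)
  have DC: "D \<subseteq> carrier G" using fb by (simp add: free_basis_def)
  case Nil
  show ?case
  proof (rule ccontr)
    assume "[] \<noteq> v2"
    then have "weval G id v2 \<noteq> \<one>" using fb Nil by (auto simp: free_basis_def reduced_word_red id_def)
    then show False using Nil.prems(5) by (simp add: id_def)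
  qed
next
  have DC: "D \<subseteq> carrier G" using fb by (simp add: free_basis_def)
  case (Cons x v1)
  have c1: "\<forall>z\<in>set (x # v1). id (fst z) \<in> carrier G" using Cons.prems DC by auto
  have c2: "\<forall>z\<in>set v2. id (fst z) \<in> carrier G" using Cons.prems DC by auto
  show ?case
  proof (cases v2)
    case Nil
    have "weval G id (x # v1) \<noteq> \<one>" using fb Cons.prems by (auto simp: free_basis_def reduced_word_red id_def)
    then show ?thesis using Cons.prems Nil by simp
  next
    case (Cons y v2')
    obtain a b where x: "x = (a, b)" by (cases x)
    obtain a' b' where y: "y = (a', b')" by (cases y)
    show ?thesis
    proof (cases "x = y")
      case True
      have ha: "(if b then a else inv a) \<in> carrier G" using c1 x by auto
      have e1: "weval G id (x # v1) = (if b then a else inv a) \<otimes> weval G id v1" using x by simp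
      have v2e: "v2 = (a, b) # v2'" using Cons True x by simp
      have e2: "weval G id v2 = (if b then a else inv a) \<otimes> weval G id v2'" unfolding v2e by simp
      have w1: "weval G id v1 \<in> carrier G" using c1 by (simp add: weval_closed)
      have w2: "weval G id v2' \<in> carrier G" using c2 Cons by (simp add: weval_closed)
      have p5: "weval G id (x # v1) = weval G id v2" using Cons.prems(5) by (simp add: id_def)
      have "(if b then a else inv a) \<otimes> weval G id v1 = (if b then a else inv a) \<otimes> weval G id v2'"
        using p5 e1 e2 by simp
      then have "weval G id v1 = weval G id v2'"
        using ha w1 w2 by simp
      moreover have "red v1" "red v2'" using Cons.prems Cons by (auto simp: red_Cons)
      moreover have "set (map fst v1) \<subseteq> D" "set (map fst v2') \<subseteq> D" using Cons.prems Cons by auto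
      ultimately have "v1 = v2'" by (intro Cons.IH)
      then show ?thesis using True Cons by simp
    next
      case False
      define W where "W = winv (x # v1) @ v2"
      have nc: "\<not> cancels (fst x, \<not> snd x) y" using False by (auto simp: cancels_def prod_eq_iff)
      have "red (winv (x # v1) @ v2)"
        unfolding red_append red_winv using Cons.prems(1,2) nc Cons
        by (simp add: winv_Cons)
      then have "red W" unfolding W_def .
      moreover have "W \<noteq> []" using Cons W_def by simp
      moreover have "set (map fst W) \<subseteq> D" using Cons.prems fst_set_winv[of "x # v1"]
        by (auto simp: W_def)
      moreover have "weval G id W = \<one>"
      proof -
        have c1': "\<forall>z\<in>set (winv (x # v1)). id (fst z) \<in> carrier G"
        proof
          fix z assume "z \<in> set (winv (x # v1))"
          then have "fst z \<in> fst ` set (x # v1)" by (metis fst_set_winv imageI)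
          then show "id (fst z) \<in> carrier G" using c1 by auto
        qed
        have "weval G id W = inv (weval G id (x # v1)) \<otimes> weval G id v2"
          unfolding W_def using c1 c1' c2 by (simp add: weval_append weval_winv)
        then show ?thesis using Cons.prems(5) c2 by (simp add: weval_closed id_def)
      qed
      ultimately show ?thesis using fb by (auto simp: free_basis_def reduced_word_red id_def)
    qed
  qed
qed

end

lemma reduce_exists:
  "\<exists>w'. red w' \<and> length w' \<le> length w \<and> set w' \<subseteq> set w \<and> (\<forall>Rel. pres_eq Rel w w') \<and>
     (\<forall>(G::('g, 'm) monoid_scheme) h. group G \<longrightarrow> (\<forall>x\<in>set w. h (fst x) \<in> carrier G) \<longrightarrow>
        weval G h w' = weval G h w)"
proof (induction "length w" arbitrary: w rule: less_induct)
  case less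
  show ?case
  proof (cases "red w")
    case True then show ?thesis by (intro exI[of _ w]) (auto intro: pres_eq.refl)
  next
    case False
    then obtain u a b v where w: "w = u @ [(a, b), (a, \<not> b)] @ v" using not_red_split by blast
    have "length (u @ v) < length w" using w by simp
    from less[OF this] obtain w' where IH: "red w'" "length w' \<le> length (u @ v)" "set w' \<subseteq> set (u @ v)"
      "\<forall>Rel. pres_eq Rel (u @ v) w'"
      "\<forall>(G::('g, 'm) monoid_scheme) h. group G \<longrightarrow> (\<forall>x\<in>set (u @ v). h (fst x) \<in> carrier G) \<longrightarrow>
        weval G h w' = weval G h (u @ v)" by blast
    have "\<forall>Rel. pres_eq Rel w w'"
      using IH(4) w by (metis pres_eq.cancel pres_eq.sym pres_eq.trans)
    moreover have "\<forall>(G::('g, 'm) monoid_scheme) h. group G \<longrightarrow> (\<forall>x\<in>set w. h (fst x) \<in> carrier G) \<longrightarrow>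
        weval G h w' = weval G h w"
    proof (intro allI impI)
      fix G :: "('g, 'm) monoid_scheme" and h
      assume G: "group G" and c: "\<forall>x\<in>set w. h (fst x) \<in> carrier G"
      then have "weval G h w = weval G h (u @ v)" using w group.weval_cancel[OF G, of u h v a b] by auto
      then show "weval G h w' = weval G h w" using IH(5) G c w by auto
    qed
    ultimately show ?thesis using IH(1-3) w by (intro exI[of _ w']) auto
  qed
qed


fun rho :: "('h, 'm) monoid_scheme \<Rightarrow> (nat \<Rightarrow> 'h) \<Rightarrow> nat \<Rightarrow> 'h gen1 \<Rightarrow> 'h" where
  "rho H d p (HG t) = (if t \<in> carrier H then t else \<one>\<^bsub>H\<^esub>)"
| "rho H d p (X i) = (if i < p then d i else \<one>\<^bsub>H\<^esub>)"
| "rho H d p (A i) = (if i < p then d i else \<one>\<^bsub>H\<^esub>)"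
| "rho H d p (Y i) = \<one>\<^bsub>H\<^esub>"
| "rho H d p (Z i) = \<one>\<^bsub>H\<^esub>"
| "rho H d p (B i) = \<one>\<^bsub>H\<^esub>"
| "rho H d p S1 = \<one>\<^bsub>H\<^esub>"

fun tr :: "(nat \<Rightarrow> 'h) \<Rightarrow> nat \<Rightarrow> 'h gen1 \<times> bool \<Rightarrow> ('h \<times> bool) list" where
  "tr d p (HG t, b) = [(t, b)]"
| "tr d p (X i, b) = (if i < p then [(d i, b)] else [])"
| "tr d p (A i, b) = (if i < p then [(d i, b)] else [])"
| "tr d p (Y i, b) = []"
| "tr d p (Z i, b) = []"
| "tr d p (B i, b) = []"
| "tr d p (S1, b) = []"

lemma weval_map: "weval G id (map (\<lambda>(a, b). (h a, b)) w) = weval G h w"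
proof (induction w)
  case (Cons x w) then show ?case by (cases x) auto
qed simp

lemma red_map: "inj_on h (fst ` set w) \<Longrightarrow> red (map (\<lambda>(a, b). (h a, b)) w) = red w"
proof (induction w rule: red.induct)
  case (3 x y w)
  have "h (fst x) = h (fst y) \<longleftrightarrow> fst x = fst y" using 3(2) by (auto dest: inj_onD)
  moreover have "inj_on h (fst ` set (y # w))" using 3(2) by (auto intro: inj_on_subset)
  ultimately show ?case using 3(1) by (cases x; cases y) (auto simp: cancels_def)
qed auto

lemma tr_len: "length (concat (map (tr d p) w)) \<le> length w"
proof (induction w)
  case (Cons x w)
  obtain a b where x: "x = (a, b)" by (cases x)
  have "length (tr d p x) \<le> 1" unfolding x by (cases a) auto
  then show ?case using Cons by simp
qed simp

lemma tr_letters: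
  assumes "d ` {..<p} \<subseteq> T"
  shows "(\<forall>x\<in>set w. fst x \<in> S1set T p) \<Longrightarrow> set (map fst (concat (map (tr d p) w))) \<subseteq> T"
proof (induction w)
  case (Cons x w)
  obtain a b where x: "x = (a, b)" by (cases x)
  have "a \<in> S1set T p" using Cons.prems x by auto
  then have "set (map fst (tr d p x)) \<subseteq> T" unfolding x using assms
    by (cases a) (auto simp: S1set_def)
  then show ?case using Cons by auto
qed simp

context group begin

lemma rho_carrier: "d ` {..<p} \<subseteq> carrier G \<Longrightarrow> rho G d p a \<in> carrier G"
  by (cases a) auto

lemma weval_rho_HG: "set (map fst w) \<subseteq> carrier G \<Longrightarrow>
   weval G (rho G d p) (map (\<lambda>(t, b). (HG t, b)) w) = weval G id w"
proof (induction w)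
  case (Cons x w) then show ?case by (cases x) auto
qed simp

lemma rho_rels:
  assumes "T \<subseteq> carrier G" "d ` {..<p} \<subseteq> carrier G" "r \<in> G1_rels G T d p"
  shows "weval G (rho G d p) r = \<one>"
proof -
  have rc: "\<And>a. rho G d p a \<in> carrier G" using rho_carrier assms(2) by blast
  have dc: "\<And>i. i < p \<Longrightarrow> d i \<in> carrier G" using assms(2) by auto
  show ?thesis
    using assms(3) unfolding G1_rels_def
  proof (elim UnE)
    assume "r \<in> {map (\<lambda>(t, b). (HG t, b)) w | w. set (map fst w) \<subseteq> T \<and> weval G id w = \<one>}"
    then obtain w where "r = map (\<lambda>(t, b). (HG t, b)) w" "set (map fst w) \<subseteq> T" "weval G id w = \<one>"
      by blast
    then show ?thesis using weval_rho_HG[of w] assms(1) by auto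
  qed (auto simp: comm_word_def dc rc)
qed

lemma tr_weval:
  assumes "T \<subseteq> carrier G" "d ` {..<p} \<subseteq> carrier G"
  shows "(\<forall>x\<in>set w. fst x \<in> S1set T p) \<Longrightarrow>
    weval G id (concat (map (tr d p) w)) = weval G (rho G d p) w"
proof (induction w)
  case (Cons x w)
  obtain a b where x: "x = (a, b)" by (cases x)
  have aS: "a \<in> S1set T p" using Cons.prems x by auto
  have IH: "weval G id (concat (map (tr d p) w)) = weval G (rho G d p) w" using Cons by (auto simp: id_def)
  have wc: "weval G (rho G d p) w \<in> carrier G"
    using weval_closed rho_carrier[OF assms(2)] by blast
  show ?case unfolding x using IH aS assms wc
    by (cases a) (auto simp: S1set_def id_def)
qed simp

end

lemma inv_mono:
  fixes \<Delta> f :: "real \<Rightarrow> real"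
  assumes "mono_on {0..} \<Delta>" "bij_betw \<Delta> {0..} {0..}" "f = the_inv_into {0..} \<Delta>"
    and "0 \<le> a" "a \<le> b"
  shows "f a \<le> f b"
proof (rule ccontr)
  assume "\<not> f a \<le> f b"
  have inj: "inj_on \<Delta> {0..}" and im: "\<Delta> ` {0..} = {0..}" using assms(2) by (auto simp: bij_betw_def)
  have ai: "a \<in> \<Delta> ` {0..}" "b \<in> \<Delta> ` {0..}" using im assms(4,5) by auto
  have fa: "f a \<in> {0..}" "\<Delta> (f a) = a" using assms(3)
    the_inv_into_into[OF inj ai(1) order_refl] f_the_inv_into_f[OF inj ai(1)] by auto
  have fb: "f b \<in> {0..}" "\<Delta> (f b) = b" using assms(3)
    the_inv_into_into[OF inj ai(2) order_refl] f_the_inv_into_f[OF inj ai(2)] by auto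
  have "\<Delta> (f b) \<le> \<Delta> (f a)" using mono_onD[OF assms(1) fb(1) fa(1)] \<open>\<not> f a \<le> f b\<close>
    by auto
  then have "a = b" using fa fb assms(5) by simp
  then show False using \<open>\<not> f a \<le> f b\<close> by simp
qed


theorem lemma3p7:
  fixes H :: "('h, 'm) monoid_scheme" and T :: "'h set" and d :: "nat \<Rightarrow> 'h" and p :: nat
    and \<Delta> f :: "real \<Rightarrow> real"
    and w0 w1 :: "('h gen1 \<times> bool) list"
  assumes "group H" and "finite T" and "T \<subseteq> carrier H" and "generate H T = carrier H"
    and "fin_presented H T"
    and "d ` {..<p} \<subseteq> T" and "inj_on d {..<p}" and "free_basis H (d ` {..<p})"
    and "mono_on {0..} \<Delta>" and "bij_betw \<Delta> {0..} {0..}" and "\<forall>r\<ge>1. r \<le> \<Delta> r"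
    and "lip_equiv \<Delta> (Dist H T (d ` {..<p}))"
    and "f = the_inv_into {0..} \<Delta>"
    and "\<forall>g \<in> generate H (d ` {..<p}). f (real (wlen H (d ` {..<p}) g)) \<le> real (wlen H T g)"
    and "set (map fst w0) \<subseteq> A ` {..<p}"
    and "set (map fst w1) \<subseteq> B ` {..<p}"
  shows "f (real (glen (G1_rels H T d p) (S1set T p) w0))
           \<le> real (glen (G1_rels H T d p) (S1set T p) (winv w1 @ w0))"
proof -
  let ?Rel = "G1_rels H T d p" and ?S = "S1set T p" and ?D = "d ` {..<p}" and ?r = "rho H d p"
  interpret H: group H by fact
  have DC: "?D \<subseteq> carrier H" using assms(3,6) by auto
  have rc: "\<And>a. ?r a \<in> carrier H" using H.rho_carrier[OF DC] .
  have rr: "\<forall>r\<in>?Rel. weval H ?r r = \<one>\<^bsub>H\<^esub>" using H.rho_rels[OF assms(3) DC] by blast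
  have AS: "A ` {..<p} \<subseteq> ?S" "B ` {..<p} \<subseteq> ?S" by (auto simp: S1set_def)
  define n where "n = glen ?Rel ?S (winv w1 @ w0)"
  have "\<exists>w'. set (map fst w') \<subseteq> ?S \<and> length w' = n \<and> pres_eq ?Rel (winv w1 @ w0) w'"
  proof -
    have e: "set (map fst (winv w1 @ w0)) = fst ` set w1 \<union> fst ` set w0"
      using fst_set_winv[of w1] by auto
    have ls: "set (map fst (winv w1 @ w0)) \<subseteq> ?S"
      unfolding e using assms(15,16) AS by (simp only: set_map) blast
    have ex: "\<exists>k w'. set (map fst w') \<subseteq> ?S \<and> length w' = k \<and> pres_eq ?Rel (winv w1 @ w0) w'"
      using ls pres_eq.refl by blast
    show ?thesis unfolding n_def glen_def by (rule LeastI_ex) (use ex in blast)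
  qed
  then obtain w' where w': "set (map fst w') \<subseteq> ?S" "length w' = n" "pres_eq ?Rel (winv w1 @ w0) w'"
    by blast
  define g where "g = weval H ?r w0"
  have c0: "\<forall>x\<in>set w0. ?r (fst x) \<in> carrier H" using rc by auto
  have c1: "\<forall>x\<in>set (winv w1). ?r (fst x) \<in> carrier H" using rc by auto
  have one1: "weval H ?r (winv w1) = \<one>\<^bsub>H\<^esub>"
  proof (rule H.weval_one, rule ballI)
    fix x assume "x \<in> set (winv w1)"
    then have "fst x \<in> fst ` set w1" by (metis fst_set_winv imageI)
    then have "fst x \<in> B ` {..<p}" using assms(16) by auto
    then show "?r (fst x) = \<one>\<^bsub>H\<^esub>" by auto
  qed
  have "weval H ?r (winv w1 @ w0) = g"
    using H.weval_append[OF c1 c0] one1 H.weval_closed[OF c0] by (simp add: g_def)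
  then have gw': "weval H ?r w' = g" using H.pres_eq_weval[OF rc rr w'(3)] by simp
  have wT: "wlen H T g \<le> n"
  proof -
    let ?u = "concat (map (tr d p) w')"
    have "\<forall>x\<in>set w'. fst x \<in> ?S" using w'(1) by auto
    then have "set (map fst ?u) \<subseteq> T" "weval H id ?u = g"
      using tr_letters[OF assms(6)] H.tr_weval[OF assms(3) DC] gw' by auto
    then have "wlen H T g \<le> length ?u" unfolding wlen_def by (intro Least_le) blast
    also have "\<dots> \<le> n" using tr_len[of d p w'] w'(2) by simp
    finally show ?thesis .
  qed
  obtain w0r where w0r: "red w0r" "length w0r \<le> length w0" "set w0r \<subseteq> set w0"
      "\<forall>Rel. pres_eq Rel w0 w0r"
      "\<forall>(G::('h, 'm) monoid_scheme) h. group G \<longrightarrow> (\<forall>x\<in>set w0. h (fst x) \<in> carrier G) \<longrightarrow>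
        weval G h w0r = weval G h w0"
    using reduce_exists[where w=w0] by blast
  have g0r: "weval H ?r w0r = g" using w0r(5) assms(1) c0 by (simp add: g_def)
  define w0d where "w0d = map (\<lambda>(a, b). (?r a, b)) w0r"
  have gd: "weval H id w0d = g" unfolding w0d_def weval_map g0r ..
  have fA: "fst ` set w0r \<subseteq> A ` {..<p}" using w0r(3) assms(15) by auto
  have injA: "inj_on ?r (A ` {..<p})" using assms(7) by (auto simp: inj_on_def)
  have redd: "red w0d" unfolding w0d_def using red_map[OF inj_on_subset[OF injA fA]] w0r(1) by simp
  have ld: "set (map fst w0d) \<subseteq> ?D" using fA by (force simp: w0d_def)
  have glen0: "glen ?Rel ?S w0 \<le> length w0r"
  proof -
    have "set (map fst w0r) \<subseteq> ?S" using fA AS by auto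
    then show ?thesis unfolding glen_def using w0r(4) by (intro Least_le) blast
  qed
  have gen: "g \<in> generate H ?D" using H.weval_generate[OF ld DC] gd by simp
  define m where "m = wlen H ?D g"
  have "\<exists>v. set (map fst v) \<subseteq> ?D \<and> length v = m \<and> weval H id v = g"
  proof -
    have ex: "\<exists>k v. set (map fst v) \<subseteq> ?D \<and> length v = k \<and> weval H id v = g"
      using ld gd by blast
    show ?thesis unfolding m_def wlen_def by (rule LeastI_ex) (use ex in blast)
  qed
  then obtain v where v: "set (map fst v) \<subseteq> ?D" "length v = m" "weval H id v = g" by blast
  obtain v' where v': "red v'" "length v' \<le> length v" "set v' \<subseteq> set v"
      "\<forall>Rel. pres_eq Rel v v'"
      "\<forall>(G::('h, 'm) monoid_scheme) h. group G \<longrightarrow> (\<forall>x\<in>set v. h (fst x) \<in> carrier G) \<longrightarrow>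
        weval G h v' = weval G h v"
    using reduce_exists[where w=v] by blast
  have cv: "\<forall>x\<in>set v. id (fst x) \<in> carrier H" using v(1) DC by auto
  have gv': "weval H id v' = g" using v'(5) assms(1) cv v(3) by blast
  have lv': "set (map fst v') \<subseteq> ?D" using v'(3) v(1) by auto
  have "m \<le> length v'" unfolding m_def wlen_def using lv' gv' by (intro Least_le) blast
  then have lenv': "length v' = m" using v'(2) v(2) by simp
  have "v' = w0d" using H.reduced_unique[OF assms(8) v'(1) redd lv' ld] gv' gd by simp
  then have "length w0r = m" using lenv' by (simp add: w0d_def)
  then have "f (real (glen ?Rel ?S w0)) \<le> f (real m)"
    using inv_mono[OF assms(9,10,13)] glen0 by simp
  also have "\<dots> \<le> real (wlen H T g)" using assms(14) gen by (simp add: m_def)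
  also have "\<dots> \<le> real n" using wT by simp
  finally show ?thesis by (simp add: n_def)
qed

end
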